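(* Let $q$ be an odd prime power and $d\ge 2$. Let $V$ be a $(2d+1)$-dimensional vector space over $\mathbb{F}_q$ with basis $z,e_0,f_0,x,y,e_1,f_1,\dots,e_{d-2},f_{d-2}$ and nondegenerate symmetric bilinear form $\beta$ with $V=\langle z\rangle\perp\langle e_0,f_0\rangle\perp\langle x,y\rangle\perp\langle e_1,f_1\rangle\perp\cdots\perp\langle e_{d-2},f_{d-2}\rangle$, $\beta(z,z)=1$, $\beta(e_i,f_i)=1$, $\beta(e_i,e_i)=\beta(f_i,f_i)=0$, and $\langle x,y\rangle$ anisotropic; let $\kappa(v)=\beta(v,v)/2$ and $U=\langle x,y,e_1,f_1,\dots,e_{d-2},f_{d-2}\rangle$. Let $M$ be a maximal (a totally singular $d$-dimensional subspace of $V$). Then $M$ has a basis $b_1,\dots,b_d$ of one of the following forms, where $u_1,\dots,u_d\in U$ and $\lambda,\mu\in\mathbb{F}_q$: (i) $b_1=z+u_1$, $b_2=e_0+u_2$, $b_3=f_0+u_3$, $b_i=u_i$ for $4\le i\le d$; (ii) $b_1=z+\lambda f_0+u_1$, $b_2=e_0+\mu f_0+u_2$, $b_i=u_i$ for $3\le i\le d$; (iii) $b_1=z+\lambda e_0+u_1$, $b_2=f_0+u_2$, $b_i=u_i$ for $3\le i\le d$.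
   Context: A subspace is totally singular if $\kappa$ vanishes on all its vectors. *)

theory Defs
  imports Main "HOL-Library.Function_Algebras"
begin

text \<open>Coordinate 0 is z, 1 is e_0, 2 is f_0, 3 is x, 4 is y, and for
  1 <= i <= d-2 coordinate 2i+3 is e_i and 2i+4 is f_i.\<close>

definition vecs :: "nat \<Rightarrow> (nat \<Rightarrow> 'a::field) set" where
  "vecs d = {v. \<forall>i. 2*d+1 \<le> i \<longrightarrow> v i = 0}"

definition unitv :: "nat \<Rightarrow> nat \<Rightarrow> 'a::field" where
  "unitv k = (\<lambda>i. if i = k then 1 else 0)"

definition zv :: "nat \<Rightarrow> 'a::field" where "zv = unitv 0"
definition e0v :: "nat \<Rightarrow> 'a::field" where "e0v = unitv 1"
definition f0v :: "nat \<Rightarrow> 'a::field" where "f0v = unitv 2"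

definition scalev :: "'a::field \<Rightarrow> (nat \<Rightarrow> 'a) \<Rightarrow> (nat \<Rightarrow> 'a)" where
  "scalev c v = (\<lambda>i. c * v i)"

text \<open>The bilinear form beta; a, b, c are the Gram entries
  beta(x,x) = a, beta(x,y) = beta(y,x) = b, beta(y,y) = c.\<close>
definition beta :: "nat \<Rightarrow> 'a \<Rightarrow> 'a \<Rightarrow> 'a \<Rightarrow> (nat \<Rightarrow> 'a::field) \<Rightarrow> (nat \<Rightarrow> 'a) \<Rightarrow> 'a" where
  "beta d a b c v w =
     v 0 * w 0 + (v 1 * w 2 + v 2 * w 1)
     + (a * v 3 * w 3 + b * (v 3 * w 4 + v 4 * w 3) + c * v 4 * w 4)
     + (\<Sum>i\<in>{1..d-2}. v (2*i+3) * w (2*i+4) + v (2*i+4) * w (2*i+3))"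

definition kappa :: "nat \<Rightarrow> 'a \<Rightarrow> 'a \<Rightarrow> 'a \<Rightarrow> (nat \<Rightarrow> 'a::field) \<Rightarrow> 'a" where
  "kappa d a b c v = beta d a b c v v / 2"

definition anisotropic_plane :: "'a::field \<Rightarrow> 'a \<Rightarrow> 'a \<Rightarrow> bool" where
  "anisotropic_plane a b c \<longleftrightarrow>
     (\<forall>s t. a*s*s + 2*b*s*t + c*t*t = 0 \<longrightarrow> s = 0 \<and> t = 0)"

definition Usp :: "nat \<Rightarrow> (nat \<Rightarrow> 'a::field) set" where
  "Usp d = {v \<in> vecs d. v 0 = 0 \<and> v 1 = 0 \<and> v 2 = 0}"

definition is_subspace :: "nat \<Rightarrow> (nat \<Rightarrow> 'a::field) set \<Rightarrow> bool" where
  "is_subspace d W \<longleftrightarrow> W \<subseteq> vecs d \<and> (\<lambda>_. 0) \<in> W \<and>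
     (\<forall>v\<in>W. \<forall>w\<in>W. v + w \<in> W) \<and> (\<forall>c. \<forall>v\<in>W. scalev c v \<in> W)"

definition lincomb :: "(nat \<Rightarrow> 'a::field) \<Rightarrow> (nat \<Rightarrow> 'a) list \<Rightarrow> (nat \<Rightarrow> 'a)" where
  "lincomb cs bs = (\<lambda>i. \<Sum>j<length bs. cs j * (bs ! j) i)"

definition lspan :: "(nat \<Rightarrow> 'a::field) list \<Rightarrow> (nat \<Rightarrow> 'a) set" where
  "lspan bs = {lincomb cs bs | cs. True}"

definition lin_indep :: "(nat \<Rightarrow> 'a::field) list \<Rightarrow> bool" where
  "lin_indep bs \<longleftrightarrow> (\<forall>cs. lincomb cs bs = (\<lambda>_. 0) \<longrightarrow> (\<forall>j<length bs. cs j = 0))"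

definition is_basis_of :: "(nat \<Rightarrow> 'a::field) list \<Rightarrow> (nat \<Rightarrow> 'a) set \<Rightarrow> bool" where
  "is_basis_of bs W \<longleftrightarrow> lin_indep bs \<and> lspan bs = W"

definition totally_singular :: "nat \<Rightarrow> 'a \<Rightarrow> 'a \<Rightarrow> 'a \<Rightarrow> (nat \<Rightarrow> 'a::field) set \<Rightarrow> bool" where
  "totally_singular d a b c W \<longleftrightarrow> (\<forall>v\<in>W. kappa d a b c v = 0)"

definition is_maximal :: "nat \<Rightarrow> 'a \<Rightarrow> 'a \<Rightarrow> 'a \<Rightarrow> (nat \<Rightarrow> 'a::field) set \<Rightarrow> bool" where
  "is_maximal d a b c M \<longleftrightarrow> is_subspace d M \<and> totally_singular d a b c M \<and>
     (\<exists>bs. length bs = d \<and> is_basis_of bs M)"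

end

theory Submission
  imports Defs "HOL-Library.FuncSet"
begin

lemma lincomb_Nil[simp]: "lincomb cs [] = 0"
  by (simp add: lincomb_def zero_fun_def)

lemma lincomb_Cons: "lincomb cs (x#xs) = scalev (cs 0) x + lincomb (\<lambda>j. cs (Suc j)) xs"
  unfolding lincomb_def scalev_def plus_fun_def length_Cons sum.lessThan_Suc_shift by simp

lemma lincomb_append: "lincomb cs (xs@ys) = lincomb cs xs + lincomb (\<lambda>j. cs (j + length xs)) ys"
proof (induction xs arbitrary: cs)
  case Nil then show ?case by simp
next
  case (Cons x xs) then show ?case by (simp add: lincomb_Cons add.assoc)
qed

lemma lincomb_cong: "(\<And>j. j < length bs \<Longrightarrow> cs j = cs' j) \<Longrightarrow> lincomb cs bs = lincomb cs' bs"
  unfolding lincomb_def by (intro ext sum.cong) auto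

lemma lincomb_add: "lincomb (\<lambda>j. cs j + cs' j) bs = lincomb cs bs + lincomb cs' bs"
  unfolding lincomb_def by (auto simp: plus_fun_def algebra_simps sum.distrib)

lemma lincomb_scale: "lincomb (\<lambda>j. k * cs j) bs = scalev k (lincomb cs bs)"
  unfolding lincomb_def scalev_def by (auto simp: sum_distrib_left algebra_simps)

definition closedsub :: "(nat \<Rightarrow> 'a::field) set \<Rightarrow> bool" where
  "closedsub W \<longleftrightarrow> 0 \<in> W \<and> (\<forall>v\<in>W. \<forall>w\<in>W. v + w \<in> W) \<and> (\<forall>c. \<forall>v\<in>W. scalev c v \<in> W)"

lemma lincomb_in: "closedsub W \<Longrightarrow> set bs \<subseteq> W \<Longrightarrow> lincomb cs bs \<in> W"
proof (induction bs arbitrary: cs)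
  case Nil then show ?case by (simp add: closedsub_def lincomb_def zero_fun_def)
next
  case (Cons x xs)
  then have "scalev (cs 0) x \<in> W" "lincomb (\<lambda>j. cs (Suc j)) xs \<in> W" unfolding closedsub_def by auto
  then show ?case unfolding lincomb_Cons using Cons.prems(1) unfolding closedsub_def by blast
qed

lemma lspan_sub: "closedsub W \<Longrightarrow> set bs \<subseteq> W \<Longrightarrow> lspan bs \<subseteq> W"
  unfolding lspan_def using lincomb_in by blast

lemma closedsub_lspan: "closedsub (lspan bs)"
  unfolding closedsub_def lspan_def
proof (intro conjI ballI allI)
  show "0 \<in> {lincomb cs bs |cs. True}"
    by (rule CollectI, rule exI[of _ "\<lambda>_. 0"]) (simp add: lincomb_def zero_fun_def)
next
  fix v w assume "v \<in> {lincomb cs bs |cs. True}" "w \<in> {lincomb cs bs |cs. True}"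
  then obtain cs cs' where "v = lincomb cs bs" "w = lincomb cs' bs" by auto
  then show "v + w \<in> {lincomb cs bs |cs. True}" using lincomb_add[of cs cs' bs] by (intro CollectI exI[of _ "\<lambda>j. cs j + cs' j"]) simp
next
  fix c v assume "v \<in> {lincomb cs bs |cs. True}"
  then obtain cs where "v = lincomb cs bs" by auto
  then show "scalev c v \<in> {lincomb cs bs |cs. True}" using lincomb_scale[of c cs bs] by (intro CollectI exI[of _ "\<lambda>j. c * cs j"]) simp
qed

lemma in_lspan: "x \<in> set bs \<Longrightarrow> x \<in> lspan bs"
proof -
  assume "x \<in> set bs"
  then obtain j where j: "j < length bs" "bs ! j = x" by (auto simp: in_set_conv_nth)
  have "lincomb (\<lambda>i. if i = j then 1 else 0) bs = x"
  proof
    fix i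
    have "(\<Sum>ja<length bs. (if ja = j then 1 else 0) * (bs ! ja) i) = (\<Sum>ja<length bs. if ja = j then (bs ! ja) i else 0)"
      by (rule sum.cong) auto
    also have "\<dots> = (bs ! j) i" using j by simp
    finally show "lincomb (\<lambda>i. if i = j then 1 else 0) bs i = x i" unfolding lincomb_def using j by simp
  qed
  then show ?thesis unfolding lspan_def by blast
qed

lemma lin_indep_Cons:
  assumes li: "lin_indep bs" and nx: "x \<notin> lspan bs"
  shows "lin_indep (x#bs)"
  unfolding lin_indep_def
proof (intro allI impI)
  fix cs j assume h: "lincomb cs (x#bs) = (\<lambda>_. 0)" and j: "j < length (x#bs)"
  have h2: "scalev (cs 0) x + lincomb (\<lambda>j. cs (Suc j)) bs = 0"
    using h by (simp add: lincomb_Cons zero_fun_def)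
  have c0: "cs 0 = 0"
  proof (rule ccontr)
    assume "cs 0 \<noteq> 0"
    have "x = lincomb (\<lambda>j. (- 1 / cs 0) * cs (Suc j)) bs"
      unfolding lincomb_scale using h2 \<open>cs 0 \<noteq> 0\<close>
      by (auto simp: scalev_def fun_eq_iff plus_fun_def field_simps)
         (metis add.commute add_eq_0_iff)
    then show False using nx unfolding lspan_def by blast
  qed
  then have "lincomb (\<lambda>j. cs (Suc j)) bs = (\<lambda>_. 0)"
    using h2 by (simp add: scalev_def zero_fun_def plus_fun_def fun_eq_iff)
  then have "\<forall>i<length bs. cs (Suc i) = 0" using li unfolding lin_indep_def by blast
  then show "cs j = 0" using c0 j by (cases j) auto
qed

lemma lincomb_diff0:
  assumes "lin_indep bs" "lincomb cs bs = lincomb cs' bs" "j < length bs"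
  shows "cs j = cs' j"
proof -
  have "lincomb (\<lambda>j. cs j + (- 1) * cs' j) bs = lincomb cs bs + scalev (-1) (lincomb cs' bs)"
    by (subst lincomb_add) (subst lincomb_scale, rule refl)
  also have "\<dots> = (\<lambda>_. 0)" using assms(2) by (simp add: fun_eq_iff scalev_def)
  finally show ?thesis using assms(1,3) unfolding lin_indep_def by force
qed

lemma card_ge2: "2 \<le> card (UNIV :: 'q::{field,finite} set)"
proof -
  have "card {0::'q, 1} = 2" by simp
  moreover have "card {0::'q, 1} \<le> card (UNIV::'q set)" by (rule card_mono) auto
  ultimately show ?thesis by simp
qed

lemma card_lspan:
  fixes bs :: "(nat \<Rightarrow> 'q::{field,finite}) list"
  assumes li: "lin_indep bs"
  shows "card (lspan bs) = card (UNIV::'q set) ^ length bs"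
proof -
  define P where "P = PiE {..<length bs} (\<lambda>_. UNIV :: 'q set)"
  have eq: "lspan bs = (\<lambda>cs. lincomb cs bs) ` P"
  proof
    show "lspan bs \<subseteq> (\<lambda>cs. lincomb cs bs) ` P"
    proof
      fix v assume "v \<in> lspan bs"
      then obtain cs where v: "v = lincomb cs bs" unfolding lspan_def by auto
      have "v = lincomb (restrict cs {..<length bs}) bs" unfolding v by (rule lincomb_cong) auto
      moreover have "restrict cs {..<length bs} \<in> P" unfolding P_def by auto
      ultimately show "v \<in> (\<lambda>cs. lincomb cs bs) ` P" by blast
    qed
  qed (auto simp: lspan_def)
  have inj: "inj_on (\<lambda>cs. lincomb cs bs) P"
  proof
    fix cs cs' assume "cs \<in> P" "cs' \<in> P" "lincomb cs bs = lincomb cs' bs"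
    then have "\<And>j. j < length bs \<Longrightarrow> cs j = cs' j" using lincomb_diff0[OF li] by blast
    then show "cs = cs'" using \<open>cs \<in> P\<close> \<open>cs' \<in> P\<close> unfolding P_def by (intro PiE_ext) auto
  qed
  have "card (lspan bs) = card P" unfolding eq by (rule card_image[OF inj])
  also have "\<dots> = card (UNIV::'q set) ^ length bs" unfolding P_def by (simp add: card_PiE)
  finally show ?thesis .
qed

lemma extend_basis:
  fixes W :: "(nat \<Rightarrow> 'q::{field,finite}) set"
  assumes "finite W" "closedsub W"
  shows "lin_indep bs \<Longrightarrow> set bs \<subseteq> W \<Longrightarrow> \<exists>xs. set xs \<subseteq> W \<and> lin_indep (xs@bs) \<and> lspan (xs@bs) = W"
proof (induction "card W - length bs" arbitrary: bs rule: less_induct)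
  case less
  have sub: "lspan bs \<subseteq> W" using lspan_sub[OF assms(2) less.prems(2)] .
  show ?case
  proof (cases "lspan bs = W")
    case True then show ?thesis using less.prems by (intro exI[of _ "[]"]) auto
  next
    case False
    then obtain x where x: "x \<in> W" "x \<notin> lspan bs" using sub by auto
    have li: "lin_indep (x#bs)" using lin_indep_Cons[OF less.prems(1) x(2)] .
    have s: "set (x#bs) \<subseteq> W" using x less.prems by auto
    have "length (x#bs) < 2 ^ length (x#bs)" by (rule less_exp)
    also have "\<dots> \<le> card (UNIV::'q set) ^ length (x#bs)" using card_ge2 by (intro power_mono) auto
    also have "\<dots> = card (lspan (x#bs))" using card_lspan[OF li] by simp
    also have "\<dots> \<le> card W" using lspan_sub[OF assms(2) s] assms(1) by (intro card_mono) auto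
    finally have "card W - length (x#bs) < card W - length bs" by simp
    from less.hyps[OF this li s] obtain xs where "set xs \<subseteq> W" "lin_indep (xs @ x # bs)" "lspan (xs @ x # bs) = W"
      by blast
    then show ?thesis using x by (intro exI[of _ "xs @ [x]"]) auto
  qed
qed

lemma finite_vecs: "finite (vecs d :: (nat \<Rightarrow> 'q::{field,finite}) set)"
proof -
  let ?N = "{..<2*d+1}"
  have "inj_on (\<lambda>v. restrict v ?N) (vecs d :: (nat \<Rightarrow> 'q) set)"
  proof
    fix v w :: "nat \<Rightarrow> 'q" assume "v \<in> vecs d" "w \<in> vecs d" "restrict v ?N = restrict w ?N"
    show "v = w"
    proof
      fix k show "v k = w k"
      proof (cases "k < 2*d+1")
        case True then show ?thesis using \<open>restrict v ?N = restrict w ?N\<close> by (metis lessThan_iff restrict_apply')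
      next
        case False then show ?thesis using \<open>v \<in> vecs d\<close> \<open>w \<in> vecs d\<close> unfolding vecs_def by auto
      qed
    qed
  qed
  moreover have "(\<lambda>v. restrict v ?N) ` (vecs d :: (nat \<Rightarrow> 'q) set) \<subseteq> PiE ?N (\<lambda>_. UNIV)" by (intro image_subsetI) (simp only: restrict_PiE_iff, simp)
  moreover have "finite (PiE ?N (\<lambda>_. UNIV :: 'q set))" by (rule finite_PiE) auto
  ultimately show ?thesis using inj_on_finite by blast
qed

lemma even_invol:
  "finite A \<Longrightarrow> (\<forall>x\<in>A. f x \<in> A \<and> f x \<noteq> x \<and> f (f x) = x) \<Longrightarrow> even (card A)"
proof (induction "card A" arbitrary: A rule: less_induct)
  case less
  show ?case
  proof (cases "A = {}")
    case True then show ?thesis by simp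
  next
    case False
    then obtain x where x: "x \<in> A" by auto
    let ?A = "A - {x, f x}"
    have c: "card ?A = card A - 2" using x less.prems by (subst card_Diff_subset) auto
    have c2: "card A \<ge> 2" using x less.prems card_mono[of A "{x, f x}"] by auto
    have fx: "f x \<in> A" "f x \<noteq> x" "f (f x) = x" using x less.prems(2) by auto
    have cl: "\<forall>y\<in>?A. f y \<in> ?A \<and> f y \<noteq> y \<and> f (f y) = y"
    proof
      fix y assume y: "y \<in> ?A"
      then have "y \<in> A" "y \<noteq> x" "y \<noteq> f x" by auto
      then have "f y \<in> A" "f y \<noteq> y" "f (f y) = y" using less.prems(2) by auto
      moreover have "f y \<noteq> x" using \<open>f (f y) = y\<close> \<open>y \<noteq> f x\<close> by auto
      moreover have "f y \<noteq> f x" using \<open>f (f y) = y\<close> fx(3) \<open>y \<noteq> x\<close> by metis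
      ultimately show "f y \<in> ?A \<and> f y \<noteq> y \<and> f (f y) = y" by auto
    qed
    have "even (card ?A)"
      by (rule less.hyps) (use less.prems c c2 cl in auto)
    then show ?thesis using c c2 by auto
  qed
qed

lemma two_ne0: "odd (card (UNIV :: 'q::{field,finite} set)) \<Longrightarrow> (2::'q) \<noteq> 0"
proof
  assume o: "odd (card (UNIV::'q set))" and t: "(2::'q) = 0"
  have "even (card (UNIV::'q set))"
  proof (rule even_invol[of _ "\<lambda>x. x + 1"])
    show "\<forall>x\<in>UNIV. x + 1 \<in> UNIV \<and> x + 1 \<noteq> (x::'q) \<and> x + 1 + 1 = x"
    proof
      fix x :: 'q
      have "x + 1 + 1 = x + 2" by (simp add: add.assoc one_add_one)
      then have "x + 1 + 1 = x" using t by simp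
      moreover have "x + 1 \<noteq> x" by simp
      ultimately show "x + 1 \<in> UNIV \<and> x + 1 \<noteq> (x::'q) \<and> x + 1 + 1 = x" by simp
    qed
  qed simp
  then show False using o by simp
qed

definition UI :: "nat set \<Rightarrow> (nat \<Rightarrow> 'a::field) set" where
 "UI I = {v. \<forall>k. v k \<noteq> 0 \<longrightarrow> k = 3 \<or> k = 4 \<or> (\<exists>i\<in>I. k = 2*i+3 \<or> k = 2*i+4)}"

definition BI :: "'a \<Rightarrow> 'a \<Rightarrow> 'a \<Rightarrow> nat set \<Rightarrow> (nat\<Rightarrow>'a::field) \<Rightarrow> (nat\<Rightarrow>'a) \<Rightarrow> 'a" where
 "BI a b c I v w = (a * v 3 * w 3 + b * (v 3 * w 4 + v 4 * w 3) + c * v 4 * w 4)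
    + (\<Sum>i\<in>I. v (2*i+3) * w (2*i+4) + v (2*i+4) * w (2*i+3))"

lemma par_ne[simp]: "2*(x::nat) \<noteq> Suc (2*y)" "Suc (2*x) \<noteq> 2*y" by presburger+

lemma BI_add_left: "BI a b c I (v + v') w = BI a b c I v w + BI a b c I v' w"
  by (simp add: BI_def sum.distrib algebra_simps)

lemma BI_sym: "BI a b c I v w = BI a b c I w v"
  by (simp add: BI_def algebra_simps)

lemma BI_add_right: "BI a b c I w (v + v') = BI a b c I w v + BI a b c I w v'"
  using BI_add_left BI_sym by metis

lemma BI_scale_left: "BI a b c I (scalev k v) w = k * BI a b c I v w"
  by (simp add: BI_def scalev_def sum_distrib_left algebra_simps)

lemma BI_unit:
  assumes "j \<in> X" "finite X" "0 \<notin> X"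
  shows "BI a b c X v (unitv (2*j+3)) = v (2*j+4)"
proof -
  have j: "j \<noteq> 0" using assms by metis
  have "(\<Sum>i\<in>X. v (2*i+3) * unitv (2*j+3) (2*i+4) + v (2*i+4) * unitv (2*j+3) (2*i+3))
      = (\<Sum>i\<in>X. if i = j then v (2*j+4) else 0)"
    by (rule sum.cong) (auto simp: unitv_def)
  also have "\<dots> = v (2*j+4)" using assms by simp
  finally show ?thesis using j unfolding BI_def by (simp add: unitv_def)
qed

lemma BI_unit_self:
  assumes "j \<in> X" "finite X" "0 \<notin> X"
  shows "BI a b c X (unitv (2*j+3)) (unitv (2*j+3)) = 0"
proof -
  have "(\<Sum>i\<in>X. unitv (2*j+3) (2*i+3) * unitv (2*j+3) (2*i+4) + unitv (2*j+3) (2*i+4) * unitv (2*j+3) (2*i+3))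
      = (\<Sum>i\<in>X. 0)"
    by (rule sum.cong) (auto simp: unitv_def)
  moreover have "j \<noteq> 0" using assms by metis
  ultimately show ?thesis unfolding BI_def by (simp add: unitv_def)
qed

lemma witt:
  fixes T :: "(nat \<Rightarrow> 'q::{field,finite}) set"
  assumes fin: "finite I" and nz: "0 \<notin> I" and an: "anisotropic_plane a b c" and two: "(2::'q) \<noteq> 0"
  shows "finite T \<Longrightarrow> closedsub T \<Longrightarrow> T \<subseteq> UI I \<Longrightarrow> (\<forall>t\<in>T. BI a b c I t t = 0)
    \<Longrightarrow> card T \<le> card (UNIV::'q set) ^ card I"
  using fin nz
proof (induction I arbitrary: T rule: finite_induct)
  case empty
  have "T \<subseteq> {0}"
  proof
    fix t assume t: "t \<in> T"
    have "a * t 3 * t 3 + 2 * b * t 3 * t 4 + c * t 4 * t 4 = 0"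
      using empty.prems(4) t unfolding BI_def by (simp add: algebra_simps)
    then have "t 3 = 0 \<and> t 4 = 0" using an unfolding anisotropic_plane_def by blast
    then have "t = 0" using empty.prems(3) t unfolding UI_def by (auto simp: fun_eq_iff)
    then show "t \<in> {0}" by simp
  qed
  then have "card T \<le> 1" using card_mono[of "{0}" T] by simp
  then show ?case by simp
next
  case (insert j I)
  define ej where "ej = 2*j+3"
  define fj where "fj = 2*j+4"
  have j0: "j \<noteq> 0" using insert by auto
  have nzI: "0 \<notin> I" using insert by auto
  define pr where "pr t = (\<lambda>k. if k = ej \<or> k = fj then 0 else (t::nat\<Rightarrow>'q) k)" for t
  define T1 where "T1 = {t\<in>T. t fj = 0}"
  define T' where "T' = pr ` T1"
  have cl: "0 \<in> T" "\<And>v w. v \<in> T \<Longrightarrow> w \<in> T \<Longrightarrow> v + w \<in> T" "\<And>k v. v \<in> T \<Longrightarrow> scalev k v \<in> T"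
    using insert.prems(2) unfolding closedsub_def by auto
  have BIins: "BI a b c (insert j I) v w = BI a b c I v w + (v ej * w fj + v fj * w ej)" for v w
    using insert.hyps unfolding BI_def ej_def fj_def by (simp add: algebra_simps)
  have BIpr: "BI a b c I (pr v) (pr w) = BI a b c I v w" for v w
  proof -
    have "(\<Sum>i\<in>I. pr v (2*i+3) * pr w (2*i+4) + pr v (2*i+4) * pr w (2*i+3))
        = (\<Sum>i\<in>I. v (2*i+3) * w (2*i+4) + v (2*i+4) * w (2*i+3))"
      using insert.hyps(2) by (intro sum.cong) (auto simp: pr_def ej_def fj_def)
    moreover have "pr v 3 = v 3" "pr v 4 = v 4" "pr w 3 = w 3" "pr w 4 = w 4"
      using j0 by (auto simp: pr_def ej_def fj_def)
    ultimately show ?thesis unfolding BI_def by simp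
  qed
  have finT': "finite T'" unfolding T'_def T1_def using insert.prems(1) by simp
  have clT': "closedsub T'"
    unfolding closedsub_def
  proof (intro conjI ballI allI)
    have "pr 0 = 0" by (simp add: pr_def fun_eq_iff)
    moreover have "0 \<in> T1" using cl(1) unfolding T1_def by simp
    ultimately show "0 \<in> T'" unfolding T'_def by force
  next
    fix v w assume "v \<in> T'" "w \<in> T'"
    then obtain v1 w1 where "v1 \<in> T1" "w1 \<in> T1" "v = pr v1" "w = pr w1" unfolding T'_def by auto
    moreover have "pr v1 + pr w1 = pr (v1 + w1)" by (simp add: pr_def fun_eq_iff)
    moreover have "v1 + w1 \<in> T1" using \<open>v1 \<in> T1\<close> \<open>w1 \<in> T1\<close> cl(2) unfolding T1_def by simp
    ultimately show "v + w \<in> T'" unfolding T'_def by auto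
  next
    fix k v assume "v \<in> T'"
    then obtain v1 where "v1 \<in> T1" "v = pr v1" unfolding T'_def by auto
    moreover have "scalev k (pr v1) = pr (scalev k v1)" by (simp add: pr_def fun_eq_iff scalev_def)
    moreover have "scalev k v1 \<in> T1" using \<open>v1 \<in> T1\<close> cl(3) unfolding T1_def by (simp add: scalev_def)
    ultimately show "scalev k v \<in> T'" unfolding T'_def by auto
  qed
  have subT': "T' \<subseteq> UI I"
  proof
    fix v assume "v \<in> T'"
    then obtain t where t: "t \<in> T" "v = pr t" unfolding T'_def T1_def by auto
    have "t \<in> UI (insert j I)" using t insert.prems(3) by auto
    then show "v \<in> UI I" unfolding UI_def t(2) pr_def ej_def fj_def by auto
  qed
  have singT': "\<forall>t\<in>T'. BI a b c I t t = 0"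
  proof
    fix v assume "v \<in> T'"
    then obtain t where t: "t \<in> T" "t fj = 0" "v = pr t" unfolding T'_def T1_def by auto
    have "BI a b c (insert j I) t t = 0" using t insert.prems(4) by auto
    then show "BI a b c I v v = 0" using BIins[of t t] BIpr[of t t] t by simp
  qed
  have IH: "card T' \<le> card (UNIV::'q set) ^ card I"
    using insert.IH[OF finT' clT' subT' singT' nzI] .
  have key: "card T \<le> card (T' \<times> (UNIV::'q set))"
  proof (cases "\<exists>w\<in>T. w fj \<noteq> 0")
    case True
    then obtain w0 where w0: "w0 \<in> T" "w0 fj \<noteq> 0" by auto
    define w where "w = scalev (1 / w0 fj) w0"
    have w: "w \<in> T" "w fj = 1" unfolding w_def by (rule cl(3)[OF w0(1)]) (use w0 in \<open>simp add: scalev_def\<close>)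
    define e :: "nat \<Rightarrow> 'q" where "e = unitv ej"
    have eT: "e \<notin> T"
    proof
      assume "e \<in> T"
      then have "w + e \<in> T" using cl(2) w by simp
      then have "BI a b c (insert j I) (w + e) (w + e) = 0" using insert.prems(4) by auto
      moreover have "BI a b c (insert j I) w w = 0" using insert.prems(4) w by auto
      moreover have "BI a b c (insert j I) w e = 1" 
        "BI a b c (insert j I) e e = 0"
        using BI_unit[of j "insert j I" a b c w] BI_unit_self[of j "insert j I" a b c]
          insert.hyps insert.prems w(2) unfolding e_def ej_def fj_def by auto
      moreover have "BI a b c (insert j I) e w = BI a b c (insert j I) w e" by (rule BI_sym)
      ultimately have "(1::'q) + 1 = 0" by (simp add: BI_add_left BI_add_right)
      then show False using two by simp
    qed
    define F where "F t = (pr (t + scalev (- t fj) w), t fj)" for t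
    have "inj_on F T"
    proof
      fix t s assume ts: "t \<in> T" "s \<in> T" "F t = F s"
      then have fs: "t fj = s fj" and pe: "pr (t + scalev (- t fj) w) = pr (s + scalev (- t fj) w)"
        unfolding F_def by auto
      have other: "t k = s k" if "k \<noteq> ej" for k
      proof (cases "k = fj")
        case True then show ?thesis using fs by simp
      next
        case False
        then show ?thesis using that fun_cong[OF pe, of k] by (simp add: pr_def scalev_def)
      qed
      show "t = s"
      proof (rule ccontr)
        assume "t \<noteq> s"
        then have ne: "t ej \<noteq> s ej" using other by (metis ext)
        define r where "r = t + scalev (-1) s"
        have "r \<in> T" using ts cl unfolding r_def by auto
        then have "scalev (1 / r ej) r \<in> T" using cl(3) by auto
        moreover have "scalev (1 / r ej) r = e"
          using ne other unfolding r_def e_def unitv_def scalev_def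
          by (auto simp: fun_eq_iff field_simps)
        ultimately show False using eT by simp
      qed
    qed
    moreover have "F ` T \<subseteq> T' \<times> UNIV"
    proof
      fix p assume "p \<in> F ` T"
      then obtain t where t: "t \<in> T" "p = F t" by auto
      have "t + scalev (- t fj) w \<in> T" using t cl w by auto
      moreover have "(t + scalev (- t fj) w) fj = 0" using w by (simp add: scalev_def)
      ultimately show "p \<in> T' \<times> UNIV" unfolding t(2) F_def T'_def T1_def by auto
    qed
    ultimately show ?thesis using finT' by (intro card_inj_on_le) auto
  next
    case False
    define F where "F t = (pr t, t ej)" for t
    have "inj_on F T"
    proof
      fix t s assume ts: "t \<in> T" "s \<in> T" "F t = F s"
      then show "t = s" using False unfolding F_def pr_def
        by (auto simp: fun_eq_iff) (metis)
    qed
    moreover have "F ` T \<subseteq> T' \<times> UNIV"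
      using False unfolding F_def T'_def T1_def by auto
    ultimately show ?thesis using finT' by (intro card_inj_on_le) auto
  qed
  also have "\<dots> = card T' * card (UNIV::'q set)" by (simp add: card_cartesian_product)
  also have "\<dots> \<le> card (UNIV::'q set) ^ card I * card (UNIV::'q set)" using IH by simp
  also have "\<dots> = card (UNIV::'q set) ^ card (insert j I)" using insert.hyps by simp
  finally show ?case .
qed

lemma beta_add_left: "beta d a b c (v + v') w = beta d a b c v w + beta d a b c v' w"
  by (simp add: beta_def sum.distrib algebra_simps)

lemma beta_sym: "beta d a b c v w = beta d a b c w v"
  by (simp add: beta_def algebra_simps)

lemma beta_add_right: "beta d a b c w (v + v') = beta d a b c w v + beta d a b c w v'"
  using beta_add_left beta_sym by metis

lemma beta_scale_left: "beta d a b c (scalev k v) w = k * beta d a b c v w"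
  by (simp add: beta_def scalev_def sum_distrib_left algebra_simps)

lemma beta_diff_left: "beta d a b c (v - v') w = beta d a b c v w - beta d a b c v' w"
  by (simp add: beta_def sum_subtractf algebra_simps)

lemma beta_diff_right: "beta d a b c w (v - v') = beta d a b c w v - beta d a b c w v'"
  using beta_diff_left beta_sym by metis

lemma beta_e0: "beta d a b c e0v w = w 2"
proof -
  have "(\<Sum>i\<in>{1..d-2}. e0v (2*i+3) * w (2*i+4) + e0v (2*i+4) * w (2*i+3)) = (\<Sum>i\<in>{1..d-2}. 0)"
    by (rule sum.cong) (auto simp: e0v_def unitv_def)
  then show ?thesis unfolding beta_def by (simp add: e0v_def unitv_def)
qed

lemma beta_lincomb: "(\<forall>x\<in>set bs. beta d a b c x w = 0) \<Longrightarrow> beta d a b c (lincomb cs bs) w = 0"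
proof (induction bs arbitrary: cs)
  case Nil then show ?case by (simp add: beta_def)
next
  case (Cons x xs) then show ?case unfolding lincomb_Cons beta_add_left beta_scale_left by simp
qed

lemma beta_lincomb2:
  assumes "\<forall>x\<in>set bs. \<forall>y\<in>set bs. beta d a b c x y = 0"
  shows "beta d a b c (lincomb cs bs) (lincomb cs' bs) = 0"
proof -
  have "\<forall>y\<in>set bs. beta d a b c (lincomb cs bs) y = 0"
    using assms beta_lincomb by blast
  then have "\<forall>y\<in>set bs. beta d a b c y (lincomb cs bs) = 0" using beta_sym by metis
  then have "beta d a b c (lincomb cs' bs) (lincomb cs bs) = 0" using beta_lincomb by blast
  then show ?thesis using beta_sym by metis
qed

lemma beta_Usp: "v \<in> Usp d \<Longrightarrow> w \<in> Usp d \<Longrightarrow> beta d a b c v w = BI a b c {1..d-2} v w"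
  by (simp add: Usp_def beta_def BI_def)

lemma Usp_UI: "Usp d \<subseteq> UI {1..d-2}"
proof
  fix v :: "nat \<Rightarrow> 'a" assume v: "v \<in> Usp d"
  show "v \<in> UI {1..d-2}" unfolding UI_def
  proof (intro CollectI allI impI)
    fix k
    assume vk: "v k \<noteq> 0"
    have vv: "v 0 = 0" "v 1 = 0" "v 2 = 0" "\<forall>i. 2*d+1 \<le> i \<longrightarrow> v i = 0" using v unfolding Usp_def vecs_def by auto
    have "k \<noteq> 0" "k \<noteq> 1" "k \<noteq> 2" "\<not> 2*d+1 \<le> k" using vv vk by (metis, metis, metis, metis)
    then have k: "3 \<le> k" "k < 2*d+1" by auto
    have "k = 3 \<or> k = 4 \<or> (\<exists>i. 1 \<le> i \<and> i \<le> d-2 \<and> (k = 2*i+3 \<or> k = 2*i+4))"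
      using k by presburger
    then show "k = 3 \<or> k = 4 \<or> (\<exists>i\<in>{1..d-2}. k = 2*i+3 \<or> k = 2*i+4)" by auto
  qed
qed

lemma lincomb2: "lincomb cs [x, y] i = cs 0 * x i + cs 1 * y i"
  by (simp add: lincomb_def eval_nat_numeral)

lemma lincomb3: "lincomb cs [x, y, z] i = cs 0 * x i + cs 1 * y i + cs 2 * z i"
  by (simp add: lincomb_def eval_nat_numeral)

lemma prefix_indep:
  assumes li: "lin_indep tb" and clU: "closedsub U" and tbU: "set tb \<subseteq> U"
    and U3: "\<forall>v\<in>U. \<forall>i<3. v i = 0"
    and P: "\<forall>cs. (\<forall>i<3. lincomb cs ps i = 0) \<longrightarrow> (\<forall>j<length ps. cs j = 0)"
  shows "lin_indep (ps @ tb)"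
  unfolding lin_indep_def
proof (intro allI impI)
  fix cs j assume h: "lincomb cs (ps @ tb) = (\<lambda>_. 0)" and j: "j < length (ps @ tb)"
  define cs' where "cs' = (\<lambda>j. cs (j + length ps))"
  have h2: "lincomb cs ps + lincomb cs' tb = (\<lambda>_. 0)" using h unfolding lincomb_append cs'_def .
  have inU: "lincomb cs' tb \<in> U" by (rule lincomb_in[OF clU tbU])
  have "\<forall>i<3. lincomb cs ps i = 0"
  proof (intro allI impI)
    fix i :: nat assume "i < 3"
    then have "lincomb cs' tb i = 0" using U3 inU by blast
    then show "lincomb cs ps i = 0" using fun_cong[OF h2, of i] by simp
  qed
  then have c1: "\<forall>j<length ps. cs j = 0" using P by blast
  then have "lincomb cs ps = lincomb (\<lambda>_. 0) ps" by (intro lincomb_cong) auto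
  also have "\<dots> = (\<lambda>_. 0)" by (simp add: lincomb_def)
  finally have "lincomb cs' tb = (\<lambda>_. 0)" using h2 by (simp add: fun_eq_iff)
  then have c2: "\<forall>j<length tb. cs' j = 0" using li unfolding lin_indep_def by blast
  show "cs j = 0"
  proof (cases "j < length ps")
    case True then show ?thesis using c1 by simp
  next
    case False
    then have "j - length ps < length tb" using j by simp
    then show ?thesis using c2 False unfolding cs'_def by (metis le_add_diff_inverse2 not_less)
  qed
qed

lemma closedsub_Usp: "closedsub (Usp d)"
  by (auto simp: closedsub_def Usp_def vecs_def scalev_def)

lemma vecs_diff: "x \<in> vecs d \<Longrightarrow> y \<in> vecs d \<Longrightarrow> x - y \<in> vecs d"
  by (simp add: vecs_def)

lemma unit_vecs: "k < 2*d+1 \<Longrightarrow> unitv k \<in> vecs d"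
  by (simp add: vecs_def unitv_def)

lemma UspI: "v \<in> vecs d \<Longrightarrow> v 0 = 0 \<Longrightarrow> v 1 = 0 \<Longrightarrow> v 2 = 0 \<Longrightarrow> v \<in> Usp d"
  by (simp add: Usp_def)

lemma UspI_diff: "x \<in> vecs d \<Longrightarrow> y \<in> vecs d \<Longrightarrow> x 0 = y 0 \<Longrightarrow> x 1 = y 1 \<Longrightarrow> x 2 = y 2 \<Longrightarrow> x - y \<in> Usp d"
  by (rule UspI) (simp_all add: vecs_diff)

lemma vecs_add: "x \<in> vecs d \<Longrightarrow> y \<in> vecs d \<Longrightarrow> x + y \<in> vecs d"
  by (simp add: vecs_def)

lemma vecs_scale: "x \<in> vecs d \<Longrightarrow> scalev t x \<in> vecs d"
  by (simp add: vecs_def scalev_def)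

lemma aux_r: "(r + scalev (- r 0) (scalev (1 / p 0) p)) i = (- r 0 / p 0) * p i + 1 * (r::nat\<Rightarrow>'a::field) i"
  by (simp add: scalev_def)

lemma lin_indep_Nil: "lin_indep []"
  by (simp add: lin_indep_def)

theorem lemma3p8:
  fixes a b c :: "'q::{field,finite}"
    and d :: nat
    and M :: "(nat \<Rightarrow> 'q) set"
  assumes "odd (card (UNIV :: 'q set))"
    and "2 \<le> d"
    and "anisotropic_plane a b c"
    and "is_maximal d a b c M"
  shows "\<exists>bs. length bs = d \<and> is_basis_of bs M \<and>
    (\<exists>u. (\<forall>i<d. u i \<in> Usp d) \<and>
      ((3 \<le> d \<and> bs ! 0 = zv + u 0 \<and> bs ! 1 = e0v + u 1 \<and> bs ! 2 = f0v + u 2 \<and>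
          (\<forall>i. 3 \<le> i \<and> i < d \<longrightarrow> bs ! i = u i))
       \<or> (\<exists>lam mu. bs ! 0 = zv + scalev lam f0v + u 0 \<and> bs ! 1 = e0v + scalev mu f0v + u 1 \<and>
          (\<forall>i. 2 \<le> i \<and> i < d \<longrightarrow> bs ! i = u i))
       \<or> (\<exists>lam. bs ! 0 = zv + scalev lam e0v + u 0 \<and> bs ! 1 = f0v + u 1 \<and>
          (\<forall>i. 2 \<le> i \<and> i < d \<longrightarrow> bs ! i = u i))))"
proof -
  have two: "(2::'q) \<noteq> 0" using assms(1) two_ne0 by blast
  define Q where "Q = card (UNIV::'q set)"
  have Q1: "1 < Q" using card_ge2[where 'q='q] unfolding Q_def by simp
  from assms(4) obtain bs0 where bs0: "length bs0 = d" "lin_indep bs0" "lspan bs0 = M"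
    and Msub: "M \<subseteq> vecs d" and clM: "closedsub M" and tsM: "\<forall>v\<in>M. kappa d a b c v = 0"
    unfolding is_maximal_def is_subspace_def is_basis_of_def totally_singular_def closedsub_def
    by (auto simp: zero_fun_def)
  have finM: "finite M" using finite_subset[OF Msub finite_vecs] .
  have cardM: "card M = Q ^ d" using card_lspan[OF bs0(2)] bs0 unfolding Q_def by simp
  have singM: "\<forall>v\<in>M. beta d a b c v v = 0" using tsM two by (auto simp: kappa_def)
  have orthM: "\<forall>v\<in>M. \<forall>w\<in>M. beta d a b c v w = 0"
  proof (intro ballI)
    fix v w assume vw: "v \<in> M" "w \<in> M"
    then have "v + w \<in> M" using clM unfolding closedsub_def by blast
    then have "beta d a b c (v + w) (v + w) = 0" using singM by blast
    then have "beta d a b c v w + beta d a b c w v = 0"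
      using singM vw by (simp add: beta_add_left beta_add_right add.commute)
    then have "2 * beta d a b c v w = 0" using beta_sym[of d a b c w v] by simp
    then show "beta d a b c v w = 0" using two by simp
  qed
  have clU: "closedsub (Usp d)" by (rule closedsub_Usp)
  have U3: "\<forall>v\<in>Usp d. \<forall>i<3. v i = 0"
    by (auto simp: Usp_def eval_nat_numeral less_Suc_eq)
  have witt': "card S \<le> Q ^ (d - 2)" if "closedsub S" "S \<subseteq> Usp d" "\<forall>t\<in>S. beta d a b c t t = 0" for S
  proof -
    have finS: "finite S" using that(2) finite_subset[OF _ finite_vecs, of S d] unfolding Usp_def by auto
    have "\<forall>t\<in>S. BI a b c {1..d-2} t t = 0" using that(2,3) beta_Usp by fastforce
    moreover have "S \<subseteq> UI {1..d-2}" using that(2) Usp_UI by blast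
    ultimately have "card S \<le> Q ^ card {1..d-2}"
      using witt[of "{1..d-2}" a b c S] assms(3) two finS that(1) unfolding Q_def by auto
    then show ?thesis by simp
  qed
  define T where "T = M \<inter> Usp d"
  have clT: "closedsub T" using clM clU unfolding closedsub_def T_def by auto
  have finT: "finite T" using finM unfolding T_def by simp
  obtain tb where tb: "set tb \<subseteq> T" "lin_indep tb" "lspan tb = T"
    using extend_basis[OF finT clT lin_indep_Nil] by auto
  define k where "k = length tb"
  have cardT: "card T = Q ^ k" using card_lspan[OF tb(2)] tb(3) unfolding Q_def k_def by simp
  have "card T \<le> Q ^ (d - 2)" using witt'[OF clT] singM unfolding T_def by auto
  then have kle: "k \<le> d - 2" using cardT Q1 by (metis power_le_imp_le_exp)
  have tbM: "set tb \<subseteq> M" using tb(1) unfolding T_def by auto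
  obtain cb where cb: "set cb \<subseteq> M" "lin_indep (cb @ tb)" "lspan (cb @ tb) = M"
    using extend_basis[OF finM clM tb(2) tbM] by auto
  have lenT: "length cb + k = d"
  proof -
    have "Q ^ (length cb + k) = Q ^ d"
      using card_lspan[OF cb(2)] cb(3) cardM unfolding Q_def k_def by simp
    then show ?thesis using Q1 by (simp add: power_inject_exp)
  qed
  have tbU: "set tb \<subseteq> Usp d" using tb(1) unfolding T_def by auto
  have Pinj: "\<forall>j<length cb. cs j = 0" if h: "\<forall>i<3. lincomb cs cb i = 0" for cs
  proof -
    have vM: "lincomb cs cb \<in> M" by (rule lincomb_in[OF clM cb(1)])
    then have "lincomb cs cb \<in> Usp d" using Msub h by (intro UspI) (auto simp: eval_nat_numeral)
    then have "lincomb cs cb \<in> lspan tb" using vM tb(3) unfolding T_def by auto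
    then obtain ct where ct: "lincomb cs cb = lincomb ct tb" unfolding lspan_def by auto
    define cs' where "cs' j = (if j < length cb then cs j else - ct (j - length cb))" for j
    have "lincomb cs' (cb @ tb) = lincomb cs cb + lincomb (\<lambda>j. (-1) * ct j) tb"
      unfolding lincomb_append
      by (intro arg_cong2[where f="(+)"] lincomb_cong) (auto simp: cs'_def)
    also have "\<dots> = (\<lambda>_. 0)" unfolding lincomb_scale ct by (simp add: scalev_def fun_eq_iff)
    finally have "\<forall>j<length (cb @ tb). cs' j = 0" using cb(2) unfolding lin_indep_def by blast
    then show ?thesis unfolding cs'_def
    proof (intro allI impI)
      fix j assume A: "\<forall>j<length (cb @ tb). (if j < length cb then cs j else - ct (j - length cb)) = 0"
        and j: "j < length cb"
      then have "j < length (cb @ tb)" by simp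
      from A[rule_format, OF this] j show "cs j = 0" by simp
    qed
  qed
  have basis_of: "is_basis_of (ps @ tb) M \<and> length (ps @ tb) = d"
    if ps: "set ps \<subseteq> M" "\<forall>cs. (\<forall>i<3. lincomb cs ps i = 0) \<longrightarrow> (\<forall>j<length ps. cs j = 0)"
       "length ps = length cb" for ps
  proof -
    have li: "lin_indep (ps @ tb)" using prefix_indep[OF tb(2) clU tbU U3 ps(2)] .
    have sub: "lspan (ps @ tb) \<subseteq> M" using ps(1) tbM by (intro lspan_sub[OF clM]) auto
    have "card (lspan (ps @ tb)) = card M"
      using card_lspan[OF li] cardM ps(3) lenT unfolding Q_def k_def by simp
    then have "lspan (ps @ tb) = M" using card_subset_eq[OF finM sub] by simp
    then show ?thesis using li ps(3) lenT unfolding is_basis_of_def k_def by simp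
  qed
  have tbi: "(ps @ tb) ! i \<in> Usp d" if "length ps \<le> i" "i < length ps + k" for ps i
    using that tbU unfolding k_def by (auto simp: nth_append)
  define P where "P = PiE {..<length cb} (\<lambda>_. UNIV :: 'q set)"
  define G where "G cs = (lincomb cs cb 0, lincomb cs cb 1, lincomb cs cb 2)" for cs
  have injG: "inj_on G P"
  proof
    fix cs cs' assume cs: "cs \<in> P" "cs' \<in> P" "G cs = G cs'"
    have eq: "lincomb (\<lambda>j. cs j + (-1) * cs' j) cb i = lincomb cs cb i - lincomb cs' cb i" for i
      unfolding lincomb_add lincomb_scale by (simp add: scalev_def)
    have "\<forall>i<3. lincomb (\<lambda>j. cs j + (-1) * cs' j) cb i = 0"
      using cs(3) unfolding eq G_def by (auto simp: eval_nat_numeral less_Suc_eq)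
    then have "\<forall>j<length cb. cs j + (-1) * cs' j = 0" using Pinj by blast
    then have "\<forall>j<length cb. cs j = cs' j" by (metis add_eq_0_iff equation_minus_iff mult_minus1)
    then show "cs = cs'" using cs(1,2) unfolding P_def by (intro PiE_ext) auto
  qed
  have cardG: "card (G ` P) = Q ^ length cb"
    using card_image[OF injG] unfolding P_def Q_def by (simp add: card_PiE)
  have cardU3: "card (UNIV :: ('q \<times> 'q \<times> 'q) set) = Q ^ 3"
    unfolding Q_def UNIV_Times_UNIV[symmetric] card_cartesian_product by (simp add: eval_nat_numeral)
  have "Q ^ length cb \<le> Q ^ 3" using cardG cardU3 card_mono[of UNIV "G ` P"] by simp
  then have len3: "length cb \<le> 3" using Q1 by (metis power_le_imp_le_exp)
  have len2: "2 \<le> length cb" using lenT kle assms(2) by simp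
  have zvv: "(zv::nat\<Rightarrow>'q) \<in> vecs d" "(e0v::nat\<Rightarrow>'q) \<in> vecs d" "(f0v::nat\<Rightarrow>'q) \<in> vecs d"
    using assms(2) unfolding zv_def e0v_def f0v_def by (auto intro!: unit_vecs)
  have zvc: "(zv::nat\<Rightarrow>'q) 0 = 1" "(zv::nat\<Rightarrow>'q) 1 = 0" "(zv::nat\<Rightarrow>'q) 2 = 0"
    "(e0v::nat\<Rightarrow>'q) 0 = 0" "(e0v::nat\<Rightarrow>'q) 1 = 1" "(e0v::nat\<Rightarrow>'q) 2 = 0"
    "(f0v::nat\<Rightarrow>'q) 0 = 0" "(f0v::nat\<Rightarrow>'q) 1 = 0" "(f0v::nat\<Rightarrow>'q) 2 = 1"
    by (simp_all add: zv_def e0v_def f0v_def unitv_def)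
  show ?thesis
  proof (cases "length cb = 3")
    case True
    have "G ` P = UNIV" using card_subset_eq[of UNIV "G ` P"] cardG cardU3 True by simp
    have hit: "\<exists>m\<in>M. m 0 = x \<and> m 1 = y \<and> m 2 = z" for x y z
    proof -
      have "(x, y, z) \<in> G ` P" using \<open>G ` P = UNIV\<close> by simp
      then obtain cs where "G cs = (x, y, z)" by auto
      moreover have "lincomb cs cb \<in> M" by (rule lincomb_in[OF clM cb(1)])
      ultimately show ?thesis unfolding G_def by auto
    qed
    obtain m1 where m1: "m1 \<in> M" "m1 0 = 1" "m1 1 = 0" "m1 2 = 0" using hit by blast
    obtain m2 where m2: "m2 \<in> M" "m2 0 = 0" "m2 1 = 1" "m2 2 = 0" using hit by blast
    obtain m3 where m3: "m3 \<in> M" "m3 0 = 0" "m3 1 = 0" "m3 2 = 1" using hit by blast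
    define ps where "ps = [m1, m2, m3]"
    have pre: "\<forall>cs. (\<forall>i<3. lincomb cs ps i = 0) \<longrightarrow> (\<forall>j<length ps. cs j = 0)"
    proof (intro allI impI)
      fix cs j assume h: "\<forall>i<3. lincomb cs ps i = 0" and j: "j < length ps"
      have "cs 0 = 0" "cs 1 = 0" "cs 2 = 0"
        using h[rule_format, of 0] h[rule_format, of 1] h[rule_format, of 2] m1 m2 m3
        unfolding ps_def lincomb3 by simp_all
      then show "cs j = 0" using j unfolding ps_def by (auto simp: less_Suc_eq eval_nat_numeral)
    qed
    have B: "is_basis_of (ps @ tb) M \<and> length (ps @ tb) = d"
      using basis_of[of ps] m1 m2 m3 pre True unfolding ps_def by simp
    define u where "u i = (if i = 0 then m1 - zv else if i = 1 then m2 - e0v else if i = 2 then m3 - f0v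
       else (ps @ tb) ! i)" for i
    have uU: "\<forall>i<d. u i \<in> Usp d"
    proof (intro allI impI)
      fix i assume i: "i < d"
      show "u i \<in> Usp d"
      proof (cases "i < 3")
        case True
        then have "i = 0 \<or> i = 1 \<or> i = 2" by auto
        moreover have mv: "m1 \<in> vecs d" "m2 \<in> vecs d" "m3 \<in> vecs d" using m1 m2 m3 Msub by auto
        moreover have "m1 - zv \<in> Usp d" using mv zvv m1 zvc by (intro UspI_diff) simp_all
        moreover have "m2 - e0v \<in> Usp d" using mv zvv m2 zvc by (intro UspI_diff) simp_all
        moreover have "m3 - f0v \<in> Usp d" using mv zvv m3 zvc by (intro UspI_diff) simp_all
        ultimately show ?thesis unfolding u_def by (elim disjE) simp_all
      next
        case False
        then show ?thesis using tbi[of ps i] i lenT True unfolding u_def ps_def by auto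
      qed
    qed
    have "3 \<le> d" using lenT True by simp
    then show ?thesis using B uU
      by (intro exI[of _ "ps @ tb"] conjI exI[of _ u] disjI1) (auto simp: ps_def u_def)
  next
    case False
    then have len2: "length cb = 2" using len2 len3 by simp
    then have kd: "k = d - 2" using lenT by simp
    obtain c1 c2 where cbe: "cb = [c1, c2]" using len2 by (auto simp: numeral_2_eq_2 length_Suc_conv)
    have c12: "c1 \<in> M" "c2 \<in> M" using cb(1) cbe by auto
    have ind2: "s = 0 \<and> t = 0" if h: "\<forall>i<3. s * c1 i + t * c2 i = 0" for s t
    proof -
      have "\<forall>i<3. lincomb (\<lambda>j. if j = 0 then s else t) cb i = 0"
        using h unfolding cbe lincomb2 by simp
      from Pinj[OF this] show ?thesis unfolding cbe
        by (metis One_nat_def length_Cons list.size(3) numeral_2_eq_2 lessI zero_less_Suc zero_neq_one)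
    qed
    have vadd: "x + y \<in> vecs d" "scalev t x \<in> vecs d" if "x \<in> vecs d" "y \<in> vecs d" for x y t
      using that by (auto simp: vecs_def scalev_def)
    have nz: "c1 0 \<noteq> 0 \<or> c2 0 \<noteq> 0"
    proof (rule ccontr)
      assume "\<not> (c1 0 \<noteq> 0 \<or> c2 0 \<noteq> 0)"
      then have z: "c1 0 = 0" "c2 0 = 0" by auto
      define D where "D = c1 1 * c2 2 - c2 1 * c1 2"
      have D: "D \<noteq> 0"
      proof
        assume D0: "D = 0"
        show False
        proof (cases "c1 1 = 0 \<and> c1 2 = 0")
          case True
          then have "\<forall>i<3. 1 * c1 i + 0 * c2 i = 0" using z by (auto simp: eval_nat_numeral less_Suc_eq)
          from ind2[OF this] show False by simp
        next
          case False
          show False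
          proof (cases "c1 2 = 0 \<and> c2 2 = 0")
            case True
            then have "c1 1 \<noteq> 0" using False by auto
            have "\<forall>i<3. c2 1 * c1 i + (- c1 1) * c2 i = 0" using z True
              by (auto simp: eval_nat_numeral less_Suc_eq algebra_simps)
            from ind2[OF this] show False using \<open>c1 1 \<noteq> 0\<close> by simp
          next
            case False
            have "\<forall>i<3. c2 2 * c1 i + (- c1 2) * c2 i = 0" using z D0 unfolding D_def
              by (auto simp: eval_nat_numeral less_Suc_eq algebra_simps)
            from ind2[OF this] show False using False by auto
          qed
        qed
      qed
      define m1 where "m1 = scalev (c2 2 / D) c1 + scalev (- c1 2 / D) c2"
      have m1: "m1 \<in> M" "m1 0 = 0" "m1 1 = 1" "m1 2 = 0"
      proof -
        show "m1 \<in> M" using c12 clM unfolding m1_def closedsub_def by blast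
        show "m1 0 = 0" using z unfolding m1_def by (simp add: scalev_def)
        have e1: "c2 2 / D * c1 1 + - c1 2 / D * c2 1 = (c2 2 * c1 1 - c1 2 * c2 1) / D"
          by (simp add: diff_divide_distrib)
        have e2: "(c2 2 * c1 1 - c1 2 * c2 1) / D = 1" using D unfolding D_def by (simp add: mult.commute)
        show "m1 1 = 1" unfolding m1_def scalev_def plus_fun_apply using e1 e2 by simp
        show "m1 2 = 0" unfolding m1_def by (simp add: scalev_def field_simps)
      qed
      obtain m2 where m2: "m2 \<in> M" "m2 2 \<noteq> 0"
      proof (cases "c1 2 = 0")
        case True
        then have "c2 2 \<noteq> 0" using D unfolding D_def by auto
        then show ?thesis using that c12 by blast
      next
        case False then show ?thesis using that c12 by blast
      qed
      define u where "u = m1 - e0v"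
      have "m1 \<in> vecs d" using m1 Msub by auto
      then have uU: "u \<in> Usp d" using m1 zvv zvc UspI_diff[of m1 d e0v] unfolding u_def by auto
      have orth_uT: "\<forall>t\<in>T. beta d a b c u t = 0"
      proof
        fix t assume t: "t \<in> T"
        then have "beta d a b c m1 t = 0" using orthM m1 unfolding T_def by auto
        moreover have "beta d a b c e0v t = 0" using t unfolding T_def Usp_def by (simp add: beta_e0)
        ultimately show "beta d a b c u t = 0" unfolding u_def by (simp add: beta_diff_left)
      qed
      have uu: "beta d a b c u u = 0"
      proof -
        have "beta d a b c m1 e0v = beta d a b c e0v m1" by (rule beta_sym)
        moreover have "beta d a b c e0v m1 = 0" using m1 by (simp add: beta_e0)
        moreover have "beta d a b c e0v e0v = 0" using zvc by (simp add: beta_e0)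
        moreover have "beta d a b c m1 m1 = 0" using singM m1 by auto
        ultimately show ?thesis unfolding u_def by (simp add: beta_diff_left beta_diff_right)
      qed
      have uT: "u \<in> T"
      proof (rule ccontr)
        assume "u \<notin> T"
        then have li: "lin_indep (u # tb)" using lin_indep_Cons[OF tb(2)] tb(3) by simp
        have pw: "\<forall>x\<in>set (u#tb). \<forall>y\<in>set (u#tb). beta d a b c x y = 0"
        proof (intro ballI)
          fix x y assume x: "x \<in> set (u#tb)" and y: "y \<in> set (u#tb)"
          show "beta d a b c x y = 0"
          proof (cases "x = u")
            case True
            then show ?thesis using y uu orth_uT tb(1) by auto
          next
            case False
            then have xT: "x \<in> T" using x tb(1) by auto
            show ?thesis
            proof (cases "y = u")
              case True
              then show ?thesis using orth_uT xT beta_sym by metis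
            next
              case False
              then have "y \<in> T" using y tb(1) by auto
              then show ?thesis using xT orthM unfolding T_def by auto
            qed
          qed
        qed
        have S1: "closedsub (lspan (u#tb))" by (rule closedsub_lspan)
        have S2: "lspan (u#tb) \<subseteq> Usp d" using uU tbU by (intro lspan_sub[OF clU]) auto
        have S3: "\<forall>t\<in>lspan (u#tb). beta d a b c t t = 0"
          using beta_lincomb2[OF pw] unfolding lspan_def by auto
        have "card (lspan (u#tb)) \<le> Q ^ (d - 2)" by (rule witt'[OF S1 S2 S3])
        moreover have "card (lspan (u#tb)) = Q ^ Suc (d - 2)"
          using card_lspan[OF li] kd unfolding Q_def k_def by simp
        ultimately show False using Q1 by simp
      qed
      then have "beta d a b c u m2 = 0" using orthM m2 unfolding T_def by auto
      moreover have "beta d a b c m1 m2 = 0" using orthM m2 m1 by auto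
      moreover have "m1 = u + e0v" unfolding u_def by simp
      ultimately have "beta d a b c e0v m2 = 0" by (simp add: beta_add_left)
      then show False using m2 by (simp add: beta_e0)
    qed
    obtain p r where pr: "p \<in> M" "r \<in> M" "p 0 \<noteq> 0"
      and ind: "\<And>s t. \<forall>i<3. s * p i + t * r i = 0 \<Longrightarrow> s = 0 \<and> t = 0"
    proof (cases "c1 0 \<noteq> 0")
      case True then show ?thesis using that[of c1 c2] c12 ind2 by blast
    next
      case False
      then have "c2 0 \<noteq> 0" using nz by simp
      moreover have "s = 0 \<and> t = 0" if "\<forall>i<3. s * c2 i + t * c1 i = 0" for s t
        using ind2[of t s] that by (simp add: add.commute)
      ultimately show ?thesis using that[of c2 c1] c12 by blast
    qed
    define p' where "p' = scalev (1 / p 0) p"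
    define r' where "r' = r + scalev (- r 0) p'"
    have p'M: "p' \<in> M" using pr clM unfolding p'_def closedsub_def by blast
    have r'M: "r' \<in> M" using pr p'M clM unfolding r'_def closedsub_def by blast
    have p'0: "p' 0 = 1" using pr unfolding p'_def by (simp add: scalev_def)
    have r'0: "r' 0 = 0" using p'0 unfolding r'_def by (simp add: scalev_def)
    have ar: "r' 1 \<noteq> 0 \<or> r' 2 \<noteq> 0"
    proof (rule ccontr)
      assume "\<not> (r' 1 \<noteq> 0 \<or> r' 2 \<noteq> 0)"
      then have A: "\<forall>i<3. r' i = 0" using r'0 by (auto simp: eval_nat_numeral less_Suc_eq)
      have "\<forall>i<3. (- r 0 / p 0) * p i + 1 * r i = 0"
      proof (intro allI impI)
        fix i :: nat assume i: "i < 3"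
        have "r' i = 0" using A i by blast
        moreover have "r' i = (- r 0 / p 0) * p i + 1 * r i"
          unfolding r'_def p'_def by (rule aux_r)
        ultimately show "(- r 0 / p 0) * p i + 1 * r i = 0" by metis
      qed
      from ind[OF this] show False by simp
    qed
    have pre2: "\<forall>cs. (\<forall>i<3. lincomb cs [b1, b2] i = 0) \<longrightarrow> (\<forall>j<length [b1, b2]. cs j = 0)"
      if "b1 0 = 1" "b2 0 = 0" "b1 l = 0" "b2 l = 1" "l < 3" for b1 b2 l
    proof (intro allI impI)
      fix cs j assume h: "\<forall>i<3. lincomb cs [b1, b2] i = 0" and j: "j < length [b1, b2]"
      have "cs 0 = 0" "cs 1 = 0" using h[rule_format, of 0] h[rule_format, of l] that
        unfolding lincomb2 by simp_all
      then show "cs j = 0" using j by (auto simp: less_Suc_eq)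
    qed
    show ?thesis
    proof (cases "r' 1 \<noteq> 0")
      case True
      define b2 where "b2 = scalev (1 / r' 1) r'"
      define b1 where "b1 = p' + scalev (- p' 1) b2"
      have bM: "b1 \<in> M" "b2 \<in> M" using p'M r'M clM unfolding b1_def b2_def closedsub_def by blast+
      have bc: "b1 0 = 1" "b2 0 = 0" "b1 1 = 0" "b2 1 = 1"
        using True p'0 r'0 unfolding b1_def b2_def by (simp_all add: scalev_def)
      define ps where "ps = [b1, b2]"
      have B: "is_basis_of (ps @ tb) M \<and> length (ps @ tb) = d"
      proof (rule basis_of)
        show "set ps \<subseteq> M" using bM unfolding ps_def by simp
        show "length ps = length cb" using len2 unfolding ps_def by simp
        show "\<forall>cs. (\<forall>i<3. lincomb cs ps i = 0) \<longrightarrow> (\<forall>j<length ps. cs j = 0)"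
          unfolding ps_def by (rule pre2[of b1 b2 1]) (use bc in simp_all)
      qed
      define lam where "lam = b1 2"
      define mu where "mu = b2 2"
      define u where "u i = (if i = 0 then b1 - (zv + scalev lam f0v)
         else if i = 1 then b2 - (e0v + scalev mu f0v) else (ps @ tb) ! i)" for i
      have uU: "\<forall>i<d. u i \<in> Usp d"
      proof (intro allI impI)
        fix i assume i: "i < d"
        show "u i \<in> Usp d"
        proof (cases "i < 2")
          case True
          then have "i = 0 \<or> i = 1" by auto
          moreover have "b1 \<in> vecs d" "b2 \<in> vecs d" using bM Msub by auto
          moreover have "zv + scalev lam f0v \<in> vecs d" "e0v + scalev mu f0v \<in> vecs d"
            using zvv by (simp_all add: vecs_add vecs_scale)
          ultimately show ?thesis unfolding u_def
            using UspI_diff[of b1 d "zv + scalev lam f0v"] UspI_diff[of b2 d "e0v + scalev mu f0v"] bc zvc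
            unfolding lam_def mu_def by (auto simp: scalev_def)
        next
          case False
          then show ?thesis using tbi[of ps i] i lenT len2 unfolding u_def ps_def by auto
        qed
      qed
      show ?thesis using B uU
        by (intro exI[of _ "ps @ tb"] conjI exI[of _ u] disjI2 disjI1 exI[of _ lam] exI[of _ mu])
           (auto simp: ps_def u_def)
    next
      case False
      then have r2: "r' 2 \<noteq> 0" using ar by simp
      define b2 where "b2 = scalev (1 / r' 2) r'"
      define b1 where "b1 = p' + scalev (- p' 2) b2"
      have bM: "b1 \<in> M" "b2 \<in> M" using p'M r'M clM unfolding b1_def b2_def closedsub_def by blast+
      have bc: "b1 0 = 1" "b2 0 = 0" "b1 2 = 0" "b2 2 = 1" "b2 1 = 0"
        using r2 False p'0 r'0 unfolding b1_def b2_def by (simp_all add: scalev_def)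
      define ps where "ps = [b1, b2]"
      have B: "is_basis_of (ps @ tb) M \<and> length (ps @ tb) = d"
      proof (rule basis_of)
        show "set ps \<subseteq> M" using bM unfolding ps_def by simp
        show "length ps = length cb" using len2 unfolding ps_def by simp
        show "\<forall>cs. (\<forall>i<3. lincomb cs ps i = 0) \<longrightarrow> (\<forall>j<length ps. cs j = 0)"
          unfolding ps_def by (rule pre2[of b1 b2 2]) (use bc in simp_all)
      qed
      define lam where "lam = b1 1"
      define u where "u i = (if i = 0 then b1 - (zv + scalev lam e0v)
         else if i = 1 then b2 - f0v else (ps @ tb) ! i)" for i
      have uU: "\<forall>i<d. u i \<in> Usp d"
      proof (intro allI impI)
        fix i assume i: "i < d"
        show "u i \<in> Usp d"
        proof (cases "i < 2")
          case True
          then have "i = 0 \<or> i = 1" by auto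
          moreover have "b1 \<in> vecs d" "b2 \<in> vecs d" using bM Msub by auto
          moreover have "zv + scalev lam e0v \<in> vecs d"
            using zvv by (simp_all add: vecs_add vecs_scale)
          ultimately show ?thesis unfolding u_def
            using UspI_diff[of b1 d "zv + scalev lam e0v"] UspI_diff[of b2 d f0v] bc zvc zvv
            unfolding lam_def by (auto simp: scalev_def)
        next
          case False
          then show ?thesis using tbi[of ps i] i lenT len2 unfolding u_def ps_def by auto
        qed
      qed
      show ?thesis using B uU
        by (intro exI[of _ "ps @ tb"] conjI exI[of _ u] disjI2 disjI2 exI[of _ lam])
           (auto simp: ps_def u_def)
    qed
  qed
qed

end
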